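(* Let $A$ be a biflat Banach algebra and $\phi\in\Delta(A)$. Then $A$ is approximately left $\phi$-biprojective.
   Context: $\Delta(A)$ is the set of characters of $A$; $A\otimes_pA$ is the projective tensor product with $a\cdot(b\otimes c)=ab\otimes c$, $(b\otimes c)\cdot a=b\otimes ca$, $\pi_A(a\otimes b)=ab$. $A$ is biflat if there is a bounded $A$-bimodule morphism $\rho:A\to(A\otimes_pA)^{**}$ such that $\pi_A^{**}\circ\rho$ is the canonical embedding of $A$ into $A^{**}$. $A$ is approximately left $\phi$-biprojective if there is a net $(\rho_\alpha)$ of bounded linear maps $A\to A\otimes_pA$ such that for all $a,x\in A$: $\|a\cdot\rho_\alpha(x)-\rho_\alpha(ax)\|\to0$, $\|\rho_\alpha(xa)-\phi(a)\rho_\alpha(x)\|\to0$, and $\phi(\pi_A(\rho_\alpha(x)))-\phi(x)\to0$. *)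

theory Defs
  imports "HOL-Analysis.Analysis"
begin

text \<open>A complex Banach algebra is modelled as a real Banach algebra of type
  'a::{real_normed_algebra, banach} together with a real-linear map J
  (multiplication by the imaginary unit) compatible with norm and product.\<close>

definition complex_structure :: "('a::{real_normed_algebra,banach} \<Rightarrow> 'a) \<Rightarrow> bool" where
  "complex_structure J \<longleftrightarrow> linear J \<and> (\<forall>x. J (J x) = - x)
     \<and> (\<forall>x t. norm (cos t *\<^sub>R x + sin t *\<^sub>R J x) = norm x)
     \<and> (\<forall>x y. J (x * y) = J x * y \<and> J (x * y) = x * J y)"

definition cdual :: "('a::{real_normed_algebra,banach} \<Rightarrow> 'a) \<Rightarrow> ('a \<Rightarrow> complex) \<Rightarrow> bool" where
  "cdual J f \<longleftrightarrow> bounded_linear f \<and> (\<forall>x. f (J x) = \<i> * f x)"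

definition character :: "('a::{real_normed_algebra,banach} \<Rightarrow> 'a) \<Rightarrow> ('a \<Rightarrow> complex) \<Rightarrow> bool" where
  "character J \<phi> \<longleftrightarrow> cdual J \<phi> \<and> (\<forall>x y. \<phi> (x * y) = \<phi> x * \<phi> y) \<and> (\<exists>x. \<phi> x \<noteq> 0)"

text \<open>Bounded complex-bilinear forms on A x A; this Banach space is the dual (A \<otimes>_p A)*.\<close>
definition cbil :: "('a::{real_normed_algebra,banach} \<Rightarrow> 'a) \<Rightarrow> ('a \<Rightarrow> 'a \<Rightarrow> complex) \<Rightarrow> bool" where
  "cbil J B \<longleftrightarrow> bounded_bilinear B \<and> (\<forall>x y. B (J x) y = \<i> * B x y \<and> B x (J y) = \<i> * B x y)"

definition bnorm :: "('a::real_normed_vector \<Rightarrow> 'a \<Rightarrow> complex) \<Rightarrow> real" where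
  "bnorm B = Sup {cmod (B x y) | x y. norm x \<le> 1 \<and> norm y \<le> 1}"

text \<open>Elements of the bidual (A \<otimes>_p A)** = (cbil forms)*: bounded complex-linear functionals
  on the space of bounded complex-bilinear forms.\<close>
definition bidual :: "('a::{real_normed_algebra,banach} \<Rightarrow> 'a) \<Rightarrow> (('a \<Rightarrow> 'a \<Rightarrow> complex) \<Rightarrow> complex) \<Rightarrow> bool" where
  "bidual J F \<longleftrightarrow>
     (\<forall>B C. cbil J B \<longrightarrow> cbil J C \<longrightarrow> F (\<lambda>x y. B x y + C x y) = F B + F C)
   \<and> (\<forall>c B. cbil J B \<longrightarrow> F (\<lambda>x y. c * B x y) = c * F B)
   \<and> (\<exists>K. \<forall>B. cbil J B \<longrightarrow> cmod (F B) \<le> K * bnorm B)"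

text \<open>Elements of the projective tensor product A \<otimes>_p A, realised (via its canonical
  isometric embedding into its bidual) as the functionals B \<mapsto> \<Sum>n. B (a n) (b n)
  with \<Sum>n. norm (a n) * norm (b n) < \<infinity>.\<close>
definition ptensor :: "('a::{real_normed_algebra,banach} \<Rightarrow> 'a) \<Rightarrow> (('a \<Rightarrow> 'a \<Rightarrow> complex) \<Rightarrow> complex) \<Rightarrow> bool" where
  "ptensor J u \<longleftrightarrow> (\<exists>a b :: nat \<Rightarrow> 'a. summable (\<lambda>n. norm (a n) * norm (b n))
       \<and> (\<forall>B. cbil J B \<longrightarrow> u B = (\<Sum>n. B (a n) (b n))))"

text \<open>Projective norm = norm as a functional on the bilinear forms (isometric duality).\<close>
definition tnorm :: "('a::{real_normed_algebra,banach} \<Rightarrow> 'a) \<Rightarrow> (('a \<Rightarrow> 'a \<Rightarrow> complex) \<Rightarrow> complex) \<Rightarrow> real" where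
  "tnorm J u = Sup {cmod (u B) | B. cbil J B \<and> bnorm B \<le> 1}"

text \<open>Module actions on A \<otimes>_p A and its bidual, expressed on bilinear forms B:
  (a\<cdot>u)(B) = u(B(a*_,_)),  (u\<cdot>a)(B) = u(B(_,_*a)).\<close>
definition lact :: "'a::{real_normed_algebra,banach} \<Rightarrow> (('a \<Rightarrow> 'a \<Rightarrow> complex) \<Rightarrow> complex) \<Rightarrow> (('a \<Rightarrow> 'a \<Rightarrow> complex) \<Rightarrow> complex)" where
  "lact a u = (\<lambda>B. u (\<lambda>x y. B (a * x) y))"

definition ract :: "(('a::{real_normed_algebra,banach} \<Rightarrow> 'a \<Rightarrow> complex) \<Rightarrow> complex) \<Rightarrow> 'a \<Rightarrow> (('a \<Rightarrow> 'a \<Rightarrow> complex) \<Rightarrow> complex)" where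
  "ract u a = (\<lambda>B. u (\<lambda>x y. B x (y * a)))"

definition clin_map :: "('a::{real_normed_algebra,banach} \<Rightarrow> 'a) \<Rightarrow> ('a \<Rightarrow> (('a \<Rightarrow> 'a \<Rightarrow> complex) \<Rightarrow> complex)) \<Rightarrow> bool" where
  "clin_map J \<rho> \<longleftrightarrow> (\<forall>B. cbil J B \<longrightarrow>
      (\<forall>x y. \<rho> (x + y) B = \<rho> x B + \<rho> y B)
    \<and> (\<forall>r x. \<rho> (r *\<^sub>R x) B = of_real r * \<rho> x B)
    \<and> (\<forall>x. \<rho> (J x) B = \<i> * \<rho> x B))"

definition biflat :: "('a::{real_normed_algebra,banach} \<Rightarrow> 'a) \<Rightarrow> bool" where
  "biflat J \<longleftrightarrow> (\<exists>\<rho>. clin_map J \<rho> \<and> (\<forall>x. bidual J (\<rho> x))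
     \<and> (\<exists>K. \<forall>x B. cbil J B \<longrightarrow> cmod (\<rho> x B) \<le> K * norm x * bnorm B)
     \<and> (\<forall>a x B. cbil J B \<longrightarrow> \<rho> (a * x) B = lact a (\<rho> x) B)
     \<and> (\<forall>a x B. cbil J B \<longrightarrow> \<rho> (x * a) B = ract (\<rho> x) a B)
     \<and> (\<forall>a f. cdual J f \<longrightarrow> \<rho> a (\<lambda>x y. f (x * y)) = f a))"

text \<open>Approximately left phi-biprojective. The net (rho_alpha) is encoded as a proper filter F
  on the space of maps (the net's tail filter); phi(pi_A(u)) = u(\<lambda>x y. phi(x*y)).\<close>
definition approx_left_phi_biprojective ::
  "('a::{real_normed_algebra,banach} \<Rightarrow> 'a) \<Rightarrow> ('a \<Rightarrow> complex) \<Rightarrow> bool" where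
  "approx_left_phi_biprojective J \<phi> \<longleftrightarrow>
    (\<exists>F :: ('a \<Rightarrow> (('a \<Rightarrow> 'a \<Rightarrow> complex) \<Rightarrow> complex)) filter. F \<noteq> bot
      \<and> (\<forall>\<^sub>F \<rho> in F. clin_map J \<rho> \<and> (\<forall>x. ptensor J (\<rho> x))
            \<and> (\<exists>K. \<forall>x. tnorm J (\<rho> x) \<le> K * norm x))
      \<and> (\<forall>a x. ((\<lambda>\<rho>. tnorm J (\<lambda>B. lact a (\<rho> x) B - \<rho> (a * x) B)) \<longlongrightarrow> 0) F)
      \<and> (\<forall>a x. ((\<lambda>\<rho>. tnorm J (\<lambda>B. \<rho> (x * a) B - \<phi> a * \<rho> x B)) \<longlongrightarrow> 0) F)
      \<and> (\<forall>x. ((\<lambda>\<rho>. \<rho> x (\<lambda>u v. \<phi> (u * v)) - \<phi> x) \<longlongrightarrow> 0) F))"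

end

theory Submission
  imports Defs "HOL-Library.Function_Algebras"
begin

definition sublin :: "('v::real_vector \<Rightarrow> real) \<Rightarrow> bool" where
  "sublin q \<longleftrightarrow> (\<forall>x y. q (x + y) \<le> q x + q y) \<and> (\<forall>r x. 0 \<le> r \<longrightarrow> q (r *\<^sub>R x) = r * q x)"

lemma sublin_add: "sublin q \<Longrightarrow> q (x + y) \<le> q x + q y"
  unfolding sublin_def by blast

lemma sublin_scale: "sublin q \<Longrightarrow> 0 \<le> r \<Longrightarrow> q (r *\<^sub>R x) = r * q x"
  unfolding sublin_def by blast

lemma sublin_0: "sublin q \<Longrightarrow> q 0 = 0"
  using sublin_scale[of q 0 0] by simp

lemma sublin_neg: "sublin q \<Longrightarrow> - q (- x) \<le> q x"
  using sublin_add[of q x "-x"] sublin_0[of q] by simp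

lemma HB0:
  fixes p :: "'v::real_vector \<Rightarrow> real"
  assumes p: "sublin p"
  shows "\<exists>L. linear L \<and> (\<forall>x. L x \<le> p x)"
proof -
  define A where "A = {q. sublin q \<and> (\<forall>x. q x \<le> p x)}"
  define P where "P = (\<lambda>q q' :: 'v \<Rightarrow> real. \<forall>x. q' x \<le> q x)"
  have lowA: "- p (- x) \<le> q x" if "q \<in> A" for q x
  proof -
    have "- q (- x) \<le> q x" using that sublin_neg unfolding A_def by blast
    moreover have "q (- x) \<le> p (- x)" using that unfolding A_def by blast
    ultimately show ?thesis by linarith
  qed
  have po: "partial_order_on A (relation_of P A)"
    unfolding partial_order_on_def preorder_on_def refl_on_def trans_on_def antisym_on_def
      relation_of_def P_def
    by (auto intro: order_trans antisym simp: fun_eq_iff)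
  have ch: "\<exists>u\<in>A. \<forall>a\<in>C. P a u" if C: "C \<in> Chains (relation_of P A)" for C
  proof (cases "C = {}")
    case True
    then show ?thesis using p unfolding A_def by auto
  next
    case False
    have CA: "C \<subseteq> A" using C unfolding Chains_def relation_of_def by auto
    have cmp: "P q1 q2 \<or> P q2 q1" if "q1 \<in> C" "q2 \<in> C" for q1 q2
      using C that unfolding Chains_def relation_of_def by auto
    define u where "u = (\<lambda>x. Inf ((\<lambda>q. q x) ` C))"
    have bdd: "bdd_below ((\<lambda>q. q x) ` C)" for x
      using lowA CA by (auto intro!: bdd_belowI[where m="- p (- x)"])
    have ule: "u x \<le> q x" if "q \<in> C" for q x
      unfolding u_def using bdd that by (auto intro: cInf_lower)
    have uge: "t \<le> u x" if "\<And>q. q \<in> C \<Longrightarrow> t \<le> q x" for t x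
      unfolding u_def using False that by (auto intro: cInf_greatest)
    have sub: "u (x + y) \<le> u x + u y" for x y
    proof -
      have 1: "u (x + y) \<le> q1 x + q2 y" if "q1 \<in> C" "q2 \<in> C" for q1 q2
      proof (cases "P q1 q2")
        case True
        have "u (x + y) \<le> q2 (x + y)" using ule that by blast
        also have "\<dots> \<le> q2 x + q2 y" using CA that sublin_add unfolding A_def by blast
        also have "\<dots> \<le> q1 x + q2 y" using True unfolding P_def by auto
        finally show ?thesis .
      next
        case False
        then have "P q2 q1" using cmp that by blast
        have "u (x + y) \<le> q1 (x + y)" using ule that by blast
        also have "\<dots> \<le> q1 x + q1 y" using CA that sublin_add unfolding A_def by blast
        also have "\<dots> \<le> q1 x + q2 y" using \<open>P q2 q1\<close> unfolding P_def by auto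
        finally show ?thesis .
      qed
      have 2: "u (x + y) - q2 y \<le> u x" if "q2 \<in> C" for q2
        using uge[of "u (x + y) - q2 y" x] 1 that by force
      have "u (x + y) - u x \<le> u y"
        using uge[of "u (x + y) - u x" y] 2 by force
      then show ?thesis by simp
    qed
    have hom: "u (r *\<^sub>R x) = r * u x" if r: "0 \<le> r" for r x
    proof (cases "r = 0")
      case True
      obtain q where q: "q \<in> C" using False by blast
      have "u 0 \<le> 0" using ule[OF q, of 0] CA q sublin_0 unfolding A_def by force
      moreover have "0 \<le> u 0" using uge[of 0 0] CA sublin_0 unfolding A_def by force
      ultimately show ?thesis using True by simp
    next
      case False
      then have rp: "0 < r" using r by simp
      have "u (r *\<^sub>R x) / r \<le> q x" if "q \<in> C" for q
      proof -
        have "u (r *\<^sub>R x) \<le> q (r *\<^sub>R x)" using ule that by blast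
        also have "\<dots> = r * q x" using CA that sublin_scale r unfolding A_def by blast
        finally show ?thesis using rp by (simp add: divide_le_eq mult.commute)
      qed
      then have "u (r *\<^sub>R x) / r \<le> u x" using uge by blast
      then have a: "u (r *\<^sub>R x) \<le> r * u x" using rp by (simp add: divide_le_eq mult.commute)
      have "r * u x \<le> q (r *\<^sub>R x)" if "q \<in> C" for q
      proof -
        have "r * u x \<le> r * q x" using ule[OF that] rp by simp
        also have "\<dots> = q (r *\<^sub>R x)"
        proof -
          have "sublin q" using CA that unfolding A_def by blast
          then show ?thesis using sublin_scale[OF _ r] by metis
        qed
        finally show ?thesis .
      qed
      then have "r * u x \<le> u (r *\<^sub>R x)" using uge by blast
      then show ?thesis using a by simp
    qed
    have "u \<in> A"
    proof -
      have "sublin u" unfolding sublin_def using sub hom by blast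
      moreover have "u x \<le> p x" for x
      proof -
        obtain q where q: "q \<in> C" using False by blast
        then have "q x \<le> p x" using CA unfolding A_def by blast
        then show ?thesis using ule[OF q, of x] by linarith
      qed
      ultimately show ?thesis unfolding A_def by blast
    qed
    moreover have "\<forall>a\<in>C. P a u" unfolding P_def using ule by blast
    ultimately show ?thesis by blast
  qed
  obtain m where mA: "m \<in> A" and mmin: "\<And>a. a \<in> A \<Longrightarrow> P m a \<Longrightarrow> a = m"
    using predicate_Zorn[OF po ch] by blast
  have msub: "sublin m" and mp: "\<And>x. m x \<le> p x" using mA unfolding A_def by auto
  have sup: "m x + m v \<le> m (x + v)" for x v
  proof -
    define g where "g = (\<lambda>x t. m (x + t *\<^sub>R v) - t * m v)"
    define q where "q = (\<lambda>x. Inf (g x ` {0..}))"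
    have glow: "- m (- x) \<le> g x t" if "0 \<le> t" for x t
    proof -
      have "m (t *\<^sub>R v) \<le> m (x + t *\<^sub>R v) + m (- x)"
        using sublin_add[OF msub, of "x + t *\<^sub>R v" "- x"] by simp
      then show ?thesis using sublin_scale[OF msub that] unfolding g_def by simp
    qed
    have bdd: "bdd_below (g x ` {0..})" for x
      using glow by (auto intro!: bdd_belowI[where m="- m (- x)"])
    have qle: "q x \<le> g x t" if "0 \<le> t" for x t
      unfolding q_def using bdd that by (auto intro: cInf_lower)
    have qge: "s \<le> q x" if "\<And>t. 0 \<le> t \<Longrightarrow> s \<le> g x t" for s x
      unfolding q_def using that by (auto intro: cInf_greatest)
    have qsub: "q (x + y) \<le> q x + q y" for x y
    proof -
      have 1: "q (x + y) \<le> g x s + g y t" if "0 \<le> s" "0 \<le> t" for s t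
      proof -
        have "q (x + y) \<le> g (x + y) (s + t)" using qle that by simp
        also have "\<dots> \<le> g x s + g y t"
          using sublin_add[OF msub, of "x + s *\<^sub>R v" "y + t *\<^sub>R v"]
          unfolding g_def by (simp add: algebra_simps scaleR_add_left)
        finally show ?thesis .
      qed
      have 2: "q (x + y) - g y t \<le> q x" if "0 \<le> t" for t
        using qge[of "q (x + y) - g y t" x] 1 that by force
      have "q (x + y) - q x \<le> q y"
        using qge[of "q (x + y) - q x" y] 2 by force
      then show ?thesis by simp
    qed
    have qhom: "q (r *\<^sub>R x) = r * q x" if r: "0 \<le> r" for r x
    proof (cases "r = 0")
      case True
      have g0: "g 0 t = 0" if "0 \<le> t" for t
        unfolding g_def using sublin_scale[OF msub that] by simp
      have "q 0 \<le> 0" using qle[of 0 0] g0[of 0] by simp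
      moreover have "0 \<le> q 0" using qge[of 0 0] g0 by simp
      ultimately show ?thesis using True by simp
    next
      case False
      then have rp: "0 < r" using r by simp
      have "q (r *\<^sub>R x) / r \<le> g x t" if t: "0 \<le> t" for t
      proof -
        have "q (r *\<^sub>R x) \<le> g (r *\<^sub>R x) (r * t)" using qle rp t by simp
        also have "\<dots> = r * g x t"
          unfolding g_def using sublin_scale[OF msub r, of "x + t *\<^sub>R v"]
          by (simp add: algebra_simps scaleR_add_right)
        finally show ?thesis using rp by (simp add: divide_le_eq mult.commute)
      qed
      then have "q (r *\<^sub>R x) / r \<le> q x" using qge by blast
      then have a: "q (r *\<^sub>R x) \<le> r * q x" using rp by (simp add: divide_le_eq mult.commute)
      have "r * q x \<le> g (r *\<^sub>R x) t" if t: "0 \<le> t" for t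
      proof -
        have "r * q x \<le> r * g x (t / r)" using qle[of "t / r" x] t rp by simp
        also have "\<dots> = g (r *\<^sub>R x) t"
          unfolding g_def using sublin_scale[OF msub r, of "x + (t / r) *\<^sub>R v"] rp
          by (simp add: algebra_simps scaleR_add_right)
        finally show ?thesis .
      qed
      then have "r * q x \<le> q (r *\<^sub>R x)" using qge by blast
      then show ?thesis using a by simp
    qed
    have qm: "q x \<le> m x" for x using qle[of 0 x] unfolding g_def by simp
    have qp: "\<forall>x. q x \<le> p x" using qm mp order_trans by blast
    have "sublin q" unfolding sublin_def using qsub qhom by blast
    then have "q \<in> A" unfolding A_def using qp by blast
    moreover have "P m q" unfolding P_def using qm by blast
    ultimately have "q = m" using mmin by blast
    then have "m x \<le> g x 1" using qle[of 1 x] by simp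
    then show ?thesis unfolding g_def by simp
  qed
  have add: "m (x + y) = m x + m y" for x y
    using sup[of x y] sublin_add[OF msub, of x y] by simp
  have neg: "m (- x) = - m x" for x
    using add[of x "- x"] sublin_0[OF msub] by simp
  have sc: "m (r *\<^sub>R x) = r * m x" for r x
  proof (cases "0 \<le> r")
    case True then show ?thesis using sublin_scale[OF msub] by blast
  next
    case False
    have "m (r *\<^sub>R x) = - m ((- r) *\<^sub>R x)" using neg[of "(- r) *\<^sub>R x"] by simp
    also have "\<dots> = r * m x" using sublin_scale[OF msub, of "- r" x] False by simp
    finally show ?thesis .
  qed
  have "linear m" by (rule linearI) (simp_all add: add sc)
  then show ?thesis using mp by blast
qed


lemma HB1:
  fixes p :: "'v::real_vector \<Rightarrow> real" and T :: "'b::real_vector \<Rightarrow> 'v" and h :: "'b \<Rightarrow> real"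
  assumes p: "sublin p" and T: "linear T" and h: "linear h" and dom: "\<And>c. h c \<le> p (T c)"
  shows "\<exists>L. linear L \<and> (\<forall>x. L x \<le> p x) \<and> (\<forall>c. L (T c) = h c)"
proof -
  define g where "g = (\<lambda>x c. p (x + T c) - h c)"
  define q where "q = (\<lambda>x. Inf (g x ` UNIV))"
  have glow: "- p (- x) \<le> g x c" for x c
  proof -
    have "p (T c) \<le> p (x + T c) + p (- x)" using sublin_add[OF p, of "x + T c" "- x"] by simp
    then show ?thesis using dom[of c] unfolding g_def by simp
  qed
  have bdd: "bdd_below (g x ` UNIV)" for x
    using glow by (auto intro!: bdd_belowI[where m="- p (- x)"])
  have qle: "q x \<le> g x c" for x c
    unfolding q_def using bdd by (auto intro: cInf_lower)
  have qge: "s \<le> q x" if "\<And>c. s \<le> g x c" for s x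
    unfolding q_def using that by (auto intro: cInf_greatest)
  have Tadd: "T (c + d) = T c + T d" for c d using T by (simp add: linear_add)
  have hadd: "h (c + d) = h c + h d" for c d using h by (simp add: linear_add)
  have Tsc: "T (r *\<^sub>R c) = r *\<^sub>R T c" for r c using T by (simp add: linear_scale)
  have hsc: "h (r *\<^sub>R c) = r * h c" for r c using h linear_scale by fastforce
  have qsub: "q (x + y) \<le> q x + q y" for x y
  proof -
    have 1: "q (x + y) \<le> g x c + g y d" for c d
    proof -
      have "q (x + y) \<le> g (x + y) (c + d)" using qle by simp
      also have "\<dots> \<le> g x c + g y d"
        using sublin_add[OF p, of "x + T c" "y + T d"]
        unfolding g_def by (simp add: algebra_simps Tadd hadd)
      finally show ?thesis .
    qed
    have 2: "q (x + y) - g y d \<le> q x" for d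
    proof (rule qge)
      fix c show "q (x + y) - g y d \<le> g x c" using 1[of c d] by simp
    qed
    have "q (x + y) - q x \<le> q y"
    proof (rule qge)
      fix d show "q (x + y) - q x \<le> g y d" using 2[of d] by simp
    qed
    then show ?thesis by simp
  qed
  have qhom: "q (r *\<^sub>R x) = r * q x" if r: "0 \<le> r" for r x
  proof (cases "r = 0")
    case True
    have "q 0 \<le> 0" using qle[of 0 0] sublin_0[OF p] T h unfolding g_def by (simp add: linear_0)
    moreover have "0 \<le> q 0" using qge[of 0 0] dom unfolding g_def by simp
    ultimately show ?thesis using True by simp
  next
    case False
    then have rp: "0 < r" using r by simp
    have "q (r *\<^sub>R x) / r \<le> g x c" for c
    proof -
      have "q (r *\<^sub>R x) \<le> g (r *\<^sub>R x) (r *\<^sub>R c)" using qle by simp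
      also have "\<dots> = r * g x c"
        unfolding g_def using sublin_scale[OF p r, of "x + T c"]
        by (simp add: algebra_simps scaleR_add_right Tsc hsc)
      finally show ?thesis using rp by (simp add: divide_le_eq mult.commute)
    qed
    then have "q (r *\<^sub>R x) / r \<le> q x" using qge by blast
    then have a: "q (r *\<^sub>R x) \<le> r * q x" using rp by (simp add: divide_le_eq mult.commute)
    have "r * q x \<le> g (r *\<^sub>R x) c" for c
    proof -
      have "r * q x \<le> r * g x ((1 / r) *\<^sub>R c)" using qle rp by simp
      also have "\<dots> = g (r *\<^sub>R x) c"
        unfolding g_def using sublin_scale[OF p r, of "x + T ((1 / r) *\<^sub>R c)"] rp
        by (simp add: algebra_simps scaleR_add_right Tsc hsc)
      finally show ?thesis .
    qed
    then have "r * q x \<le> q (r *\<^sub>R x)" using qge by blast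
    then show ?thesis using a by simp
  qed
  have "sublin q" unfolding sublin_def using qsub qhom by blast
  then obtain L where L: "linear L" and Lq: "\<And>x. L x \<le> q x" using HB0 by blast
  have "L x \<le> p x" for x
  proof -
    have "q x \<le> g x 0" by (rule qle)
    also have "\<dots> = p x" unfolding g_def using T h by (simp add: linear_0)
    finally show ?thesis using Lq[of x] by simp
  qed
  moreover have "L (T c) = h c" for c
  proof -
    have up: "L (T c) \<le> h c" for c
    proof -
      have "L (T c) \<le> g (T c) (- c)" using Lq[of "T c"] qle[of "T c" "- c"] by simp
      also have "\<dots> = h c" unfolding g_def using T h sublin_0[OF p]
        by (simp add: linear_neg)
      finally show ?thesis .
    qed
    have "L (T (- c)) \<le> h (- c)" by (rule up)
    then have "h c \<le> L (T c)" using T h L by (simp add: linear_neg)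
    then show ?thesis using up[of c] by simp
  qed
  ultimately show ?thesis using L by blast
qed

instantiation "fun" :: (type, real_vector) real_vector
begin
definition scaleR_fun :: "real \<Rightarrow> ('a \<Rightarrow> 'b) \<Rightarrow> 'a \<Rightarrow> 'b" where
  "scaleR_fun r f = (\<lambda>x. r *\<^sub>R f x)"
instance
  by standard (simp_all add: scaleR_fun_def fun_eq_iff scaleR_add_right scaleR_add_left)
end

lemma scaleR_fun_apply [simp]: "(r *\<^sub>R f) x = r *\<^sub>R f x"
  by (simp add: scaleR_fun_def)

definition cs :: "('a::{real_normed_algebra,banach} \<Rightarrow> 'a) \<Rightarrow> complex \<Rightarrow> 'a \<Rightarrow> 'a" where
  "cs J z u = Re z *\<^sub>R u + Im z *\<^sub>R J u"

context
  fixes J :: "'a::{real_normed_algebra,banach} \<Rightarrow> 'a"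
  assumes CS: "complex_structure J"
begin

lemma J_lin: "linear J" using CS unfolding complex_structure_def by blast
lemma J_add: "J (x + y) = J x + J y" using J_lin by (simp add: linear_add)
lemma J_scale: "J (r *\<^sub>R x) = r *\<^sub>R J x" using J_lin by (simp add: linear_scale)
lemma J_diff: "J (x - y) = J x - J y" using J_lin by (simp add: linear_diff)
lemma J_neg: "J (- x) = - J x" using J_lin by (simp add: linear_neg)
lemma J_zero: "J 0 = 0" using J_lin by (simp add: linear_0)
lemma JJ: "J (J x) = - x" using CS unfolding complex_structure_def by blast
lemma J_ml: "J (x * y) = J x * y" using CS unfolding complex_structure_def by blast
lemma J_mr: "J (x * y) = x * J y" using CS unfolding complex_structure_def by blast
lemma J_rot: "norm (cos t *\<^sub>R x + sin t *\<^sub>R J x) = norm x"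
  using CS unfolding complex_structure_def by blast
lemma norm_J: "norm (J x) = norm x"
  using J_rot[of "pi / 2" x] by simp

lemma norm_cs: "norm (cs J z u) = cmod z * norm u"
proof (cases "z = 0")
  case True then show ?thesis by (simp add: cs_def)
next
  case False
  then have c: "cmod z \<noteq> 0" by simp
  have "cs J z u = cmod z *\<^sub>R (cos (Arg z) *\<^sub>R u + sin (Arg z) *\<^sub>R J u)"
    using cos_Arg[OF False] sin_Arg[OF False] c unfolding cs_def
    by (simp add: scaleR_add_right)
  then show ?thesis using J_rot by simp
qed

lemma J_cs: "J (cs J z u) = cs J z (J u)"
  unfolding cs_def by (simp add: J_add J_scale)

lemma cs_add: "cs J z (u + v) = cs J z u + cs J z v"
  unfolding cs_def by (simp add: J_add algebra_simps)
lemma cs_scale: "cs J z (r *\<^sub>R u) = r *\<^sub>R cs J z u"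
  unfolding cs_def by (simp add: J_scale algebra_simps)
lemma cs_mr: "cs J z (x * u) = x * cs J z u"
  unfolding cs_def by (simp add: J_mr algebra_simps)
lemma cs_mult: "cs J w (cs J z u) = cs J (w * z) u"
proof -
  have "cs J w (cs J z u) = (Re w * Re z) *\<^sub>R u + (Re w * Im z) *\<^sub>R J u
      + ((Im w * Re z) *\<^sub>R J u + (Im w * Im z) *\<^sub>R J (J u))"
    unfolding cs_def by (simp add: J_add J_scale scaleR_add_right)
  also have "\<dots> = (Re w * Re z - Im w * Im z) *\<^sub>R u + (Re w * Im z + Im w * Re z) *\<^sub>R J u"
    by (simp add: JJ scaleR_diff_left scaleR_add_left)
  also have "\<dots> = cs J (w * z) u" unfolding cs_def by simp
  finally show ?thesis .
qed
lemma cs_one: "cs J 1 u = u" unfolding cs_def by simp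
lemma cs_inv: "z \<noteq> 0 \<Longrightarrow> cs J (inverse z) (cs J z u) = u"
  by (simp add: cs_mult cs_one)

lemma lin_cs:
  assumes "linear D" "\<And>x. D (J x) = J (D x)"
  shows "D (cs J z x) = cs J z (D x)"
  unfolding cs_def using assms by (simp add: linear_add linear_scale)

lemma cdual_cs: "cdual J f \<Longrightarrow> f (cs J z u) = z * f u"
proof -
  assume f: "cdual J f"
  then have l: "linear f" and fj: "\<And>x. f (J x) = \<i> * f x"
    unfolding cdual_def using bounded_linear.linear by blast+
  have "f (cs J z u) = of_real (Re z) * f u + of_real (Im z) * (\<i> * f u)"
    unfolding cs_def using l fj by (simp add: linear_add linear_scale scaleR_conv_of_real)
  also have "\<dots> = z * f u"
    by (subst (3) complex_eq) (simp add: algebra_simps)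
  finally show ?thesis .
qed

end

lemma cdual_add: "cdual J f \<Longrightarrow> cdual J g \<Longrightarrow> cdual J (\<lambda>u. f u + g u)"
  unfolding cdual_def by (auto intro: bounded_linear_add simp: distrib_left)

lemma cdual_scale: "cdual J f \<Longrightarrow> cdual J (\<lambda>u. z * f u)"
  unfolding cdual_def
  by (auto intro: bounded_linear_compose[OF bounded_linear_mult_right])

lemma cdual_zero: "cdual J (\<lambda>u. 0)"
  unfolding cdual_def by (simp add: bounded_linear_zero)

lemma cdual_sum: "(\<And>k. k < m \<Longrightarrow> cdual J (h k)) \<Longrightarrow> cdual J (\<lambda>u. \<Sum>k<(m::nat). h k u)"
  by (induction m) (auto simp: cdual_zero intro!: cdual_add)

lemma cdual_mult:
  assumes CS: "complex_structure J" and f: "cdual J f"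
  shows "cdual J (\<lambda>u. f (y * u))"
proof -
  have "bounded_linear (\<lambda>u. f (y * u))"
    using f unfolding cdual_def by (auto intro: bounded_linear_compose[OF _ bounded_linear_mult_right])
  moreover have "f (y * J u) = \<i> * f (y * u)" for u
    using f J_mr[OF CS, of y u] unfolding cdual_def by metis
  ultimately show ?thesis unfolding cdual_def by blast
qed

lemma cbil_prod: "cdual J f \<Longrightarrow> cdual J g \<Longrightarrow> cbil J (\<lambda>u v. f u * g v)"
  unfolding cdual_def cbil_def
  by (auto intro: bounded_bilinear.comp[OF bounded_bilinear_mult])

context
  fixes J :: "'a::{real_normed_algebra,banach} \<Rightarrow> 'a" and \<phi> :: "'a \<Rightarrow> complex"
    and \<rho> :: "'a \<Rightarrow> (('a \<Rightarrow> 'a \<Rightarrow> complex) \<Rightarrow> complex)" and e :: 'a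
  assumes CS: "complex_structure J" and CH: "character J \<phi>"
    and BD: "\<And>x. bidual J (\<rho> x)"
    and LA: "\<And>a x B. cbil J B \<Longrightarrow> \<rho> (a * x) B = lact a (\<rho> x) B"
    and RA: "\<And>a x B. cbil J B \<Longrightarrow> \<rho> (x * a) B = ract (\<rho> x) a B"
    and PI: "\<And>a f. cdual J f \<Longrightarrow> \<rho> a (\<lambda>x y. f (x * y)) = f a"
    and E1: "\<phi> e = 1"
begin

lemma phi_cdual: "cdual J \<phi>" using CH unfolding character_def by blast
lemma phi_mult: "\<phi> (x * y) = \<phi> x * \<phi> y" using CH unfolding character_def by blast

lemma R_add:
  assumes "cdual J f1" "cdual J f2"
  shows "\<rho> x (\<lambda>u v. (f1 u + f2 u) * \<phi> v) = \<rho> x (\<lambda>u v. f1 u * \<phi> v) + \<rho> x (\<lambda>u v. f2 u * \<phi> v)"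
proof -
  have "(\<lambda>u v. (f1 u + f2 u) * \<phi> v) = (\<lambda>u v. (\<lambda>u v. f1 u * \<phi> v) u v + (\<lambda>u v. f2 u * \<phi> v) u v)"
    by (simp add: fun_eq_iff distrib_right)
  then show ?thesis
    using BD[of x] cbil_prod[OF assms(1) phi_cdual] cbil_prod[OF assms(2) phi_cdual]
    unfolding bidual_def by simp
qed

lemma R_scale:
  assumes "cdual J f"
  shows "\<rho> x (\<lambda>u v. (z * f u) * \<phi> v) = z * \<rho> x (\<lambda>u v. f u * \<phi> v)"
proof -
  have "(\<lambda>u v. (z * f u) * \<phi> v) = (\<lambda>u v. z * (\<lambda>u v. f u * \<phi> v) u v)"
    by (simp add: fun_eq_iff mult.assoc)
  then show ?thesis
    using BD[of x] cbil_prod[OF assms phi_cdual] unfolding bidual_def by simp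
qed

lemma R_sum:
  "(\<And>k. k < (m::nat) \<Longrightarrow> cdual J (h k)) \<Longrightarrow>
    \<rho> x (\<lambda>u v. (\<Sum>k<m. h k u) * \<phi> v) = (\<Sum>k<m. \<rho> x (\<lambda>u v. h k u * \<phi> v))"
proof (induction m)
  case 0
  have "\<rho> x (\<lambda>u v. (0 * \<phi> u) * \<phi> v) = 0 * \<rho> x (\<lambda>u v. \<phi> u * \<phi> v)"
    by (rule R_scale[OF phi_cdual])
  then show ?case by simp
next
  case (Suc m)
  have "\<rho> x (\<lambda>u v. (\<Sum>k<Suc m. h k u) * \<phi> v)
      = \<rho> x (\<lambda>u v. ((\<Sum>k<m. h k u) + h m u) * \<phi> v)" by simp
  also have "\<dots> = \<rho> x (\<lambda>u v. (\<Sum>k<m. h k u) * \<phi> v) + \<rho> x (\<lambda>u v. h m u * \<phi> v)"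
    using Suc.prems by (intro R_add cdual_sum) auto
  also have "\<dots> = (\<Sum>k<Suc m. \<rho> x (\<lambda>u v. h k u * \<phi> v))"
    using Suc by simp
  finally show ?case .
qed

lemma R_left:
  assumes f: "cdual J f"
  shows "\<rho> e (\<lambda>u v. f (y * u) * \<phi> v) = \<rho> y (\<lambda>u v. f u * \<phi> v)"
proof -
  have cb: "cbil J (\<lambda>u v. f u * \<phi> v)" by (rule cbil_prod[OF f phi_cdual])
  have "\<rho> e (\<lambda>u v. f (y * u) * \<phi> v) = lact y (\<rho> e) (\<lambda>u v. f u * \<phi> v)"
    unfolding lact_def by simp
  also have "\<dots> = \<rho> (y * e) (\<lambda>u v. f u * \<phi> v)" using LA[OF cb] by simp
  also have "\<dots> = ract (\<rho> y) e (\<lambda>u v. f u * \<phi> v)" using RA[OF cb] by simp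
  also have "\<dots> = \<rho> y (\<lambda>u v. f u * \<phi> v)"
    unfolding ract_def by (simp add: phi_mult E1)
  finally show ?thesis .
qed

lemma R_right:
  assumes f: "cdual J f"
  shows "\<rho> (x * a) (\<lambda>u v. f u * \<phi> v) = \<phi> a * \<rho> x (\<lambda>u v. f u * \<phi> v)"
proof -
  have cb: "cbil J (\<lambda>u v. f u * \<phi> v)" by (rule cbil_prod[OF f phi_cdual])
  have "\<rho> (x * a) (\<lambda>u v. f u * \<phi> v) = \<rho> x (\<lambda>u v. f u * \<phi> (v * a))"
    using RA[OF cb] unfolding ract_def by simp
  also have "(\<lambda>u v. f u * \<phi> (v * a)) = (\<lambda>u v. \<phi> a * (\<lambda>u v. f u * \<phi> v) u v)"
    by (simp add: fun_eq_iff phi_mult)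
  also have "\<rho> x \<dots> = \<phi> a * \<rho> x (\<lambda>u v. f u * \<phi> v)"
    using BD[of x] cb unfolding bidual_def by blast
  finally show ?thesis .
qed

lemma R_pi: "\<rho> e (\<lambda>u v. \<phi> u * \<phi> v) = 1"
  using PI[OF phi_cdual, of e] E1 by (simp add: phi_mult)

end

lemma approx:
  fixes J :: "'a::{real_normed_algebra,banach} \<Rightarrow> 'a" and \<phi> :: "'a \<Rightarrow> complex"
    and e :: 'a and xs as :: "nat \<Rightarrow> 'a"
  assumes CS: "complex_structure J" and BF: "biflat J" and CH: "character J \<phi>"
    and E1: "\<phi> e = 1" and eps: "0 < \<epsilon>"
  shows "\<exists>c. (\<forall>k<n. norm (xs k * (as k * c) - cs J (\<phi> (as k)) (xs k * c)) < \<epsilon>)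
             \<and> cmod (\<phi> c - 1) < \<epsilon>"
proof (rule ccontr)
  assume H: "\<not> ?thesis"
  obtain \<rho> where BD: "\<And>x. bidual J (\<rho> x)"
    and LA: "\<And>a x B. cbil J B \<Longrightarrow> \<rho> (a * x) B = lact a (\<rho> x) B"
    and RA: "\<And>a x B. cbil J B \<Longrightarrow> \<rho> (x * a) B = ract (\<rho> x) a B"
    and PI: "\<And>a f. cdual J f \<Longrightarrow> \<rho> a (\<lambda>x y. f (x * y)) = f a"
  proof -
    from BF obtain \<rho> where r: "clin_map J \<rho> \<and> (\<forall>x. bidual J (\<rho> x))
     \<and> (\<exists>K. \<forall>x B. cbil J B \<longrightarrow> cmod (\<rho> x B) \<le> K * norm x * bnorm B)
     \<and> (\<forall>a x B. cbil J B \<longrightarrow> \<rho> (a * x) B = lact a (\<rho> x) B)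
     \<and> (\<forall>a x B. cbil J B \<longrightarrow> \<rho> (x * a) B = ract (\<rho> x) a B)
     \<and> (\<forall>a f. cdual J f \<longrightarrow> \<rho> a (\<lambda>x y. f (x * y)) = f a)"
      unfolding biflat_def by (rule exE)
    note r1 = conjunct1[OF conjunct2[OF r]]
    note r2 = conjunct1[OF conjunct2[OF conjunct2[OF conjunct2[OF r]]]]
    note r3 = conjunct1[OF conjunct2[OF conjunct2[OF conjunct2[OF conjunct2[OF r]]]]]
    note r4 = conjunct2[OF conjunct2[OF conjunct2[OF conjunct2[OF conjunct2[OF r]]]]]
    show ?thesis by (rule that[of \<rho>, OF r1[rule_format] r2[rule_format] r3[rule_format] r4[rule_format]])
  qed
  note phic = phi_cdual[OF CS CH BD LA RA PI E1]
  have phil: "linear \<phi>" using phic unfolding cdual_def using bounded_linear.linear by blast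
  have phiJ: "\<phi> (J x) = \<i> * \<phi> x" for x using phic unfolding cdual_def by blast
  define D where "D = (\<lambda>k c. xs k * (as k * c) - cs J (\<phi> (as k)) (xs k * c))"
  have Dlin: "linear (D k)" for k
    by (rule linearI) (simp_all add: D_def distrib_left cs_add[OF CS] cs_scale[OF CS] scaleR_diff_right)
  have DJ: "D k (J c) = J (D k c)" for k c
    unfolding D_def by (simp add: J_diff[OF CS] J_mr[OF CS] J_cs[OF CS])
  have Dcs: "D k (cs J z c) = cs J z (D k c)" for k z c
    by (rule lin_cs[OF CS Dlin[of k]]) (rule DJ)
  have H': "(\<exists>k<n. \<epsilon> \<le> norm (D k c)) \<or> \<epsilon> \<le> cmod (\<phi> c - 1)" for c
  proof -
    have "\<not> ((\<forall>k<n. norm (D k c) < \<epsilon>) \<and> cmod (\<phi> c - 1) < \<epsilon>)"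
      using H unfolding D_def by blast
    then show ?thesis by (auto simp: not_less)
  qed
  have bound: "\<epsilon> * cmod (\<phi> c) \<le> (\<Sum>k<n. norm (D k c))" for c
  proof (cases "\<phi> c = 0")
    case True then show ?thesis by (simp add: sum_nonneg)
  next
    case False
    define c' where "c' = cs J (inverse (\<phi> c)) c"
    have "\<phi> c' = 1" unfolding c'_def using cdual_cs[OF CS phic] False by simp
    then obtain k where k: "k < n" "\<epsilon> \<le> norm (D k c')" using H'[of c'] eps by auto
    have "norm (D k c') = norm (D k c) / cmod (\<phi> c)"
      unfolding c'_def Dcs norm_cs[OF CS] by (simp add: norm_inverse divide_inverse)
    then have "\<epsilon> * cmod (\<phi> c) \<le> norm (D k c)" using k False by (simp add: le_divide_eq)
    also have "\<dots> \<le> (\<Sum>k<n. norm (D k c))"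
      using k by (intro member_le_sum) auto
    finally show ?thesis .
  qed
  define p where "p = (\<lambda>w::nat \<Rightarrow> 'a. (\<Sum>k<n. norm (w k)) / \<epsilon>)"
  have sp: "sublin p"
    unfolding sublin_def
  proof safe
    fix w v :: "nat \<Rightarrow> 'a"
    have "(\<Sum>k<n. norm ((w + v) k)) \<le> (\<Sum>k<n. norm (w k)) + (\<Sum>k<n. norm (v k))"
      unfolding sum.distrib[symmetric] by (intro sum_mono) (simp add: plus_fun_def norm_triangle_ineq)
    then show "p (w + v) \<le> p w + p v"
      unfolding p_def using eps by (simp add: add_divide_distrib[symmetric] divide_right_mono)
  next
    fix r :: real and w :: "nat \<Rightarrow> 'a"
    assume "0 \<le> r"
    then show "p (r *\<^sub>R w) = r * p w"
      unfolding p_def by (simp add: sum_distrib_left)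
  qed
  define T where "T = (\<lambda>c. (\<lambda>k. D k c))"
  have Tlin: "linear T"
    by (rule linearI) (simp_all add: T_def fun_eq_iff plus_fun_def linear_add[OF Dlin] linear_scale[OF Dlin])
  define h where "h = (\<lambda>c. Re (\<phi> c))"
  have hlin: "linear h"
    by (rule linearI) (simp_all add: h_def linear_add[OF phil] linear_scale[OF phil])
  have dom: "h c \<le> p (T c)" for c
  proof -
    have "cmod (\<phi> c) \<le> (\<Sum>k<n. norm (D k c)) / \<epsilon>"
      using bound[of c] eps by (simp add: le_divide_eq mult.commute)
    then show ?thesis unfolding h_def p_def T_def using complex_Re_le_cmod order_trans by blast
  qed
  obtain L where Llin: "linear L" and Lp: "\<And>x. L x \<le> p x" and LT: "\<And>c. L (T c) = h c"
    using HB1[of p T h] sp Tlin hlin dom by blast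
  define g where "g = (\<lambda>k u. L (\<lambda>j. if j = k then u else 0))"
  have decomp: "L w = (\<Sum>k<m. g k (w k)) + L (\<lambda>j. if j < m then 0 else w j)" for m w
  proof (induction m)
    case 0 then show ?case by simp
  next
    case (Suc m)
    have "(\<lambda>j. if j < m then 0 else w j) = (\<lambda>j. if j = m then w m else 0) + (\<lambda>j. if j < Suc m then 0 else w j)"
      by (auto simp: fun_eq_iff plus_fun_def less_Suc_eq)
    then have "L (\<lambda>j. if j < m then 0 else w j) = g m (w m) + L (\<lambda>j. if j < Suc m then 0 else w j)"
      unfolding g_def by (simp add: linear_add[OF Llin])
    then show ?case using Suc by simp
  qed
  have tail: "L (\<lambda>j. if j < n then 0 else w j) = 0" for w
  proof -
    define t where "t = (\<lambda>j. if j < n then 0 else w j)"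
    have "p t = 0" unfolding p_def t_def by simp
    moreover have "p (- t) = 0" unfolding p_def t_def by simp
    ultimately have "L t \<le> 0" "L (- t) \<le> 0" using Lp by (metis)+
    then show ?thesis unfolding t_def[symmetric] using linear_neg[OF Llin, of t] by simp
  qed
  have RePhi: "Re (\<phi> c) = (\<Sum>k<n. g k (D k c))" for c
    using LT[of c] decomp[of "T c" n] tail[of "T c"] unfolding h_def T_def by simp
  have glin: "linear (g k)" for k
  proof (rule linearI)
    fix u v :: 'a
    have "(\<lambda>j. if j = k then u + v else 0) = (\<lambda>j. if j = k then u else 0) + (\<lambda>j. if j = k then v else 0)"
      by (auto simp: fun_eq_iff plus_fun_def)
    then show "g k (u + v) = g k u + g k v" unfolding g_def by (simp add: linear_add[OF Llin])
  next
    fix r :: real and u :: 'a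
    have "(\<lambda>j. if j = k then r *\<^sub>R u else 0) = r *\<^sub>R (\<lambda>j. if j = k then u else 0)"
      by (auto simp: fun_eq_iff)
    then show "g k (r *\<^sub>R u) = r *\<^sub>R g k u" unfolding g_def by (simp add: linear_scale[OF Llin])
  qed
  have gup: "g k u \<le> norm u / \<epsilon>" for k u
  proof -
    have "(\<Sum>j<n. norm (if j = k then u else 0)) = (\<Sum>j<n. if j = k then norm u else 0)"
      by (rule sum.cong) auto
    also have "\<dots> = (if k < n then norm u else 0)"
      using sum.delta[of "{..<n}" k "\<lambda>_. norm u"] by simp
    finally have "p (\<lambda>j. if j = k then u else 0) = (if k < n then norm u else 0) / \<epsilon>"
      unfolding p_def by simp
    also have "\<dots> \<le> norm u / \<epsilon>" using eps by (simp add: divide_right_mono)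
    finally show ?thesis using Lp unfolding g_def by (meson order_trans)
  qed
  have gabs: "\<bar>g k u\<bar> \<le> norm u / \<epsilon>" for k u
    using gup[of k u] gup[of k "- u"] linear_neg[OF glin, of k u] by simp
  define f where "f = (\<lambda>k u. Complex (g k u) (- g k (J u)))"
  have fc: "cdual J (f k)" for k
    unfolding cdual_def
  proof
    show "bounded_linear (f k)"
    proof (rule bounded_linear_intro[where K="2 / \<epsilon>"])
      fix x y show "f k (x + y) = f k x + f k y"
        unfolding f_def by (simp add: complex_eq_iff J_add[OF CS] linear_add[OF glin])
    next
      fix r x show "f k (r *\<^sub>R x) = r *\<^sub>R f k x"
        unfolding f_def by (simp add: complex_eq_iff J_scale[OF CS] linear_scale[OF glin])
    next
      fix x
      have "cmod (f k x) \<le> \<bar>g k x\<bar> + \<bar>g k (J x)\<bar>"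
        unfolding f_def using cmod_le[of "Complex (g k x) (- g k (J x))"] by simp
      also have "\<dots> \<le> norm x / \<epsilon> + norm x / \<epsilon>"
        using gabs[of k x] gabs[of k "J x"] norm_J[OF CS, of x] by simp
      finally show "norm (f k x) \<le> norm x * (2 / \<epsilon>)" by (simp add: mult.commute)
    qed
  next
    show "\<forall>x. f k (J x) = \<i> * f k x"
      unfolding f_def by (simp add: complex_eq_iff JJ[OF CS] linear_neg[OF glin])
  qed
  have phi_eq: "\<phi> c = (\<Sum>k<n. f k (D k c))" for c
  proof (rule complex_eqI)
    show "Re (\<phi> c) = Re (\<Sum>k<n. f k (D k c))"
      unfolding Re_sum f_def using RePhi by simp
    have "Im (\<phi> c) = - Re (\<phi> (J c))" using phiJ[of c] by simp
    also have "\<dots> = - (\<Sum>k<n. g k (J (D k c)))" using RePhi[of "J c"] DJ by simp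
    finally show "Im (\<phi> c) = Im (\<Sum>k<n. f k (D k c))"
      unfolding Im_sum f_def by (simp add: sum_negf)
  qed
  have fexp: "f k (D k c) = f k ((xs k * as k) * c) + (- \<phi> (as k)) * f k (xs k * c)" for k c
  proof -
    have fl: "linear (f k)" using fc[of k] unfolding cdual_def using bounded_linear.linear by blast
    show ?thesis unfolding D_def linear_diff[OF fl] cdual_cs[OF CS fc[of k]]
      by (simp add: mult.assoc)
  qed
  have cd1: "cdual J (\<lambda>u. f k ((xs k * as k) * u))" for k by (rule cdual_mult[OF CS fc[of k]])
  have cd2: "cdual J (\<lambda>u. (- \<phi> (as k)) * f k (xs k * u))" for k
    by (rule cdual_scale[OF cdual_mult[OF CS fc[of k]]])
  have "1 = \<rho> e (\<lambda>u v. \<phi> u * \<phi> v)" using R_pi[OF CS CH BD LA RA PI E1] by simp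
  also have "\<dots> = \<rho> e (\<lambda>u v. (\<Sum>k<n. f k ((xs k * as k) * u) + (- \<phi> (as k)) * f k (xs k * u)) * \<phi> v)"
  proof -
    have "\<phi> u = (\<Sum>k<n. f k ((xs k * as k) * u) + (- \<phi> (as k)) * f k (xs k * u))" for u
    proof -
      have "\<phi> u = (\<Sum>k<n. f k (D k u))" by (rule phi_eq)
      also have "\<dots> = (\<Sum>k<n. f k ((xs k * as k) * u) + (- \<phi> (as k)) * f k (xs k * u))"
        by (rule sum.cong[OF refl]) (rule fexp)
      finally show ?thesis .
    qed
    note EQ = this
    have feq: "(\<lambda>u v. \<phi> u * \<phi> v) = (\<lambda>u v. (\<Sum>k<n. f k ((xs k * as k) * u) + (- \<phi> (as k)) * f k (xs k * u)) * \<phi> v)"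
    proof (intro ext)
      fix u v
      show "\<phi> u * \<phi> v = (\<Sum>k<n. f k ((xs k * as k) * u) + (- \<phi> (as k)) * f k (xs k * u)) * \<phi> v"
        using EQ[of u] by (rule arg_cong[where f="\<lambda>t. t * \<phi> v"])
    qed
    show ?thesis using feq by (rule arg_cong)
  qed
  also have "\<dots> = (\<Sum>k<n. \<rho> e (\<lambda>u v. (f k ((xs k * as k) * u) + (- \<phi> (as k)) * f k (xs k * u)) * \<phi> v))"
    by (rule R_sum[OF CS CH BD LA RA PI E1]) (assumption | rule cdual_add cd1 cd2)+
  also have "\<dots> = (\<Sum>k<n. 0)"
  proof (rule sum.cong[OF refl])
    fix k
    have "\<rho> e (\<lambda>u v. (f k ((xs k * as k) * u) + (- \<phi> (as k)) * f k (xs k * u)) * \<phi> v)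
       = \<rho> e (\<lambda>u v. f k ((xs k * as k) * u) * \<phi> v) + \<rho> e (\<lambda>u v. ((- \<phi> (as k)) * f k (xs k * u)) * \<phi> v)"
      by (rule R_add[OF CS CH BD LA RA PI E1 cd1[of k] cd2[of k]])
    also have "\<dots> = \<rho> (xs k * as k) (\<lambda>u v. f k u * \<phi> v) + (- \<phi> (as k)) * \<rho> (xs k) (\<lambda>u v. f k u * \<phi> v)"
    proof -
      have a1: "\<rho> e (\<lambda>u v. f k ((xs k * as k) * u) * \<phi> v) = \<rho> (xs k * as k) (\<lambda>u v. f k u * \<phi> v)"
        by (rule R_left[OF CS CH BD LA RA PI E1 fc[of k]])
      have a2: "\<rho> e (\<lambda>u v. ((- \<phi> (as k)) * f k (xs k * u)) * \<phi> v) = (- \<phi> (as k)) * \<rho> e (\<lambda>u v. f k (xs k * u) * \<phi> v)"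
        by (rule R_scale[OF CS CH BD LA RA PI E1 cdual_mult[OF CS fc[of k]]])
      have a3: "\<rho> e (\<lambda>u v. f k (xs k * u) * \<phi> v) = \<rho> (xs k) (\<lambda>u v. f k u * \<phi> v)"
        by (rule R_left[OF CS CH BD LA RA PI E1 fc[of k]])
      show ?thesis by (simp only: a1 a2 a3)
    qed
    also have "\<dots> = 0" using R_right[OF CS CH BD LA RA PI E1 fc[of k]] by simp
    finally show "\<rho> e (\<lambda>u v. (f k ((xs k * as k) * u) + (- \<phi> (as k)) * f k (xs k * u)) * \<phi> v) = 0" .
  qed
  finally show False by simp
qed

lemma cbil_zero: "cbil J (\<lambda>x y. 0)"
proof -
  have "cbil J (\<lambda>u v. (\<lambda>u. 0::complex) u * (\<lambda>u. 0) v)" by (rule cbil_prod[OF cdual_zero cdual_zero])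
  then show ?thesis by simp
qed

lemma bnorm_bound:
  assumes B: "cbil J B"
  shows "0 \<le> bnorm B \<and> cmod (B x y) \<le> bnorm B * norm x * norm y"
proof -
  have bb: "bounded_bilinear B" using B unfolding cbil_def by blast
  obtain K where K: "0 < K" "\<And>a b. norm (B a b) \<le> norm a * norm b * K"
    using bounded_bilinear.pos_bounded[OF bb] by blast
  define S where "S = {cmod (B x y) | x y. norm x \<le> 1 \<and> norm y \<le> 1}"
  have bdd: "bdd_above S"
  proof (rule bdd_aboveI[where M=K])
    fix s assume "s \<in> S"
    then obtain x y where s: "s = cmod (B x y)" "norm x \<le> 1" "norm y \<le> 1" unfolding S_def by blast
    have "norm x * norm y * K \<le> 1 * 1 * K"
      using s K by (intro mult_right_mono mult_mono) auto
    then show "s \<le> K" using K(2)[of x y] s by simp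
  qed
  have z: "B 0 0 = 0" using bounded_bilinear.zero_left[OF bb] by blast
  have "0 \<in> S" unfolding S_def using z by force
  then have nn: "0 \<le> bnorm B" unfolding bnorm_def S_def[symmetric] using bdd by (rule cSup_upper)
  have "cmod (B x y) \<le> bnorm B * norm x * norm y"
  proof (cases "x = 0 \<or> y = 0")
    case True
    then have "B x y = 0"
      using bounded_bilinear.zero_left[OF bb] bounded_bilinear.zero_right[OF bb] by auto
    then show ?thesis using nn by simp
  next
    case False
    then have nx: "norm x > 0" and ny: "norm y > 0" by auto
    define x' where "x' = (1 / norm x) *\<^sub>R x"
    define y' where "y' = (1 / norm y) *\<^sub>R y"
    have "norm x' \<le> 1" "norm y' \<le> 1" unfolding x'_def y'_def using nx ny by simp_all
    then have "cmod (B x' y') \<in> S" unfolding S_def by blast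
    then have le: "cmod (B x' y') \<le> bnorm B" unfolding bnorm_def S_def[symmetric] using bdd by (rule cSup_upper)
    have "B x' y' = of_real (1 / norm x) * (of_real (1 / norm y) * B x y)"
      unfolding x'_def y'_def
      by (simp add: bounded_bilinear.scaleR_left[OF bb] bounded_bilinear.scaleR_right[OF bb] scaleR_conv_of_real)
    then have "cmod (B x' y') = cmod (B x y) / (norm x * norm y)"
      by (simp add: norm_mult norm_divide)
    then have "cmod (B x y) / (norm x * norm y) \<le> bnorm B" using le by simp
    then show ?thesis using nx ny by (simp add: divide_le_eq mult.commute mult.left_commute)
  qed
  then show ?thesis using nn by blast
qed

lemma tnorm_bounds:
  assumes "\<And>B. cbil J B \<Longrightarrow> cmod (u B) \<le> M * bnorm B" and M: "0 \<le> M"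
  shows "0 \<le> tnorm J u \<and> tnorm J u \<le> M"
proof -
  define S where "S = {cmod (u B) | B. cbil J B \<and> bnorm B \<le> 1}"
  have le: "s \<le> M" if sS: "s \<in> S" for s
  proof -
    obtain B where B: "s = cmod (u B)" "cbil J B" "bnorm B \<le> 1" using sS unfolding S_def by blast
    have "M * bnorm B \<le> M * 1" using B(3) M by (intro mult_left_mono) auto
    then show ?thesis using assms(1)[OF B(2)] B(1) by simp
  qed
  have b0: "bnorm (\<lambda>x y. 0 :: complex) = 0"
  proof -
    have "bnorm (\<lambda>x y. 0 :: complex) = Sup {0}"
      unfolding bnorm_def by (rule arg_cong[where f=Sup]) (auto intro!: exI[of _ 0])
    then show ?thesis by simp
  qed
  have "cmod (u (\<lambda>x y. 0)) \<in> S" unfolding S_def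
    by (rule CollectI, rule exI[of _ "\<lambda>x y. 0"]) (simp add: cbil_zero b0)
  moreover have "bdd_above S" using le by (rule bdd_aboveI)
  ultimately have "cmod (u (\<lambda>x y. 0)) \<le> tnorm J u" unfolding tnorm_def S_def[symmetric] by (rule cSup_upper)
  then have "0 \<le> tnorm J u" by (meson norm_ge_zero order_trans)
  moreover have "tnorm J u \<le> M" unfolding tnorm_def S_def[symmetric]
    using \<open>cmod (u (\<lambda>x y. 0)) \<in> S\<close> le by (intro cSup_least) auto
  ultimately show ?thesis by blast
qed

lemma tnorm_simple:
  "0 \<le> tnorm J (\<lambda>B. B w v) \<and> tnorm J (\<lambda>B. B w v) \<le> norm w * norm v"
proof (rule tnorm_bounds)
  fix B :: "'a \<Rightarrow> 'a \<Rightarrow> complex" assume B: "cbil J B"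
  show "cmod (B w v) \<le> norm w * norm v * bnorm B"
    using bnorm_bound[OF B, of w v] by (simp add: mult_ac)
qed simp

lemma tnorm_cong: "(\<And>B. cbil J B \<Longrightarrow> u B = u' B) \<Longrightarrow> tnorm J u = tnorm J u'"
  unfolding tnorm_def by (metis (no_types, lifting))

lemma cbil_cs: "complex_structure J \<Longrightarrow> cbil J B \<Longrightarrow> B (cs J z w) v = z * B w v"
proof -
  assume CS: "complex_structure J" and B: "cbil J B"
  have bb: "bounded_bilinear B" and BJ: "\<And>x y. B (J x) y = \<i> * B x y" using B unfolding cbil_def by auto
  have "B (cs J z w) v = of_real (Re z) * B w v + of_real (Im z) * (\<i> * B w v)"
    unfolding cs_def by (simp add: bounded_bilinear.add_left[OF bb] bounded_bilinear.scaleR_left[OF bb] BJ scaleR_conv_of_real)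
  also have "\<dots> = z * B w v" by (subst (3) complex_eq) (simp add: algebra_simps)
  finally show ?thesis .
qed

theorem corollary2p7:
  fixes J :: "'a::{real_normed_algebra,banach} \<Rightarrow> 'a" and \<phi> :: "'a \<Rightarrow> complex"
  assumes "complex_structure J"
    and "biflat J"
    and "character J \<phi>"
  shows "approx_left_phi_biprojective J \<phi>"
proof -
  note CS = assms(1) and BF = assms(2) and CH = assms(3)
  have phic: "cdual J \<phi>" using CH unfolding character_def by blast
  have phim: "\<And>x y. \<phi> (x * y) = \<phi> x * \<phi> y" using CH unfolding character_def by blast
  obtain x0 where x0: "\<phi> x0 \<noteq> 0" using CH unfolding character_def by blast
  define e where "e = cs J (inverse (\<phi> x0)) x0"
  have E1: "\<phi> e = 1" unfolding e_def using cdual_cs[OF CS phic] x0 by simp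
  define Cset :: "'a \<times> 'a \<times> real \<Rightarrow> 'a set" where
    "Cset = (\<lambda>(x, a, \<epsilon>). {c. 0 < \<epsilon> \<longrightarrow> norm (x * (a * c) - cs J (\<phi> a) (x * c)) < \<epsilon> \<and> cmod (\<phi> c - 1) < \<epsilon>})"
  define G where "G = (INF i\<in>UNIV. principal (Cset i))"
  define R :: "'a \<Rightarrow> 'a \<Rightarrow> (('a \<Rightarrow> 'a \<Rightarrow> complex) \<Rightarrow> complex)" where
    "R = (\<lambda>c x B. B (x * c) e)"
  have ev: "eventually P G" if "Cset i \<subseteq> {c. P c}" for P i
    unfolding G_def by (rule eventually_INF1[of i]) (use that in \<open>auto simp: eventually_principal\<close>)
  have Gnb: "G \<noteq> bot"
    unfolding G_def
  proof (rule INF_filter_not_bot)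
    fix X :: "('a \<times> 'a \<times> real) set" assume X: "X \<subseteq> UNIV" "finite X"
    obtain n :: nat and h where Xh: "X = h ` {i. i < n}" using finite_imp_nat_seg_image_inj_on[OF X(2)] by blast
    define xs where "xs = (\<lambda>k. fst (h k))"
    define as where "as = (\<lambda>k. fst (snd (h k)))"
    define es where "es = (\<lambda>k. snd (snd (h k)))"
    define F where "F = (\<lambda>k. if 0 < es k then es k else 1)"
    define e0 where "e0 = Min (insert 1 (F ` {..<n}))"
    have e0p: "0 < e0" unfolding e0_def F_def by (subst Min_gr_iff) auto
    have e0le: "e0 \<le> es k" if "k < n" "0 < es k" for k
    proof -
      have "es k \<in> F ` {..<n}" using that unfolding F_def by (auto intro!: image_eqI[of _ _ k])
      then show ?thesis unfolding e0_def by (intro Min_le) auto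
    qed
    obtain c where c: "\<forall>k<n. norm (xs k * (as k * c) - cs J (\<phi> (as k)) (xs k * c)) < e0"
      "cmod (\<phi> c - 1) < e0"
      using approx[OF CS BF CH E1 e0p] by blast
    have "c \<in> \<Inter> (Cset ` X)"
    proof (rule InterI)
      fix S assume "S \<in> Cset ` X"
      then obtain k where k: "k < n" "S = Cset (h k)" using Xh by auto
      have hk: "h k = (xs k, as k, es k)" by (simp add: xs_def as_def es_def)
      have "c \<in> Cset (xs k, as k, es k)" unfolding Cset_def using c k(1) e0le[of k] by force
      then show "c \<in> S" using k(2) hk by simp
    qed
    then show "(INF b\<in>X. principal (Cset b)) \<noteq> bot"
      unfolding INF_principal_finite[OF X(2), of Cset] principal_eq_bot_iff by blast
  qed
  have clin: "clin_map J (R c)" for c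
    unfolding clin_map_def R_def
  proof (intro allI impI conjI)
    fix B :: "'a \<Rightarrow> 'a \<Rightarrow> complex" assume B: "cbil J B"
    have bb: "bounded_bilinear B" and BJ: "\<And>x y. B (J x) y = \<i> * B x y" using B unfolding cbil_def by auto
    show "B ((x + y) * c) e = B (x * c) e + B (y * c) e" for x y
      by (simp add: distrib_right bounded_bilinear.add_left[OF bb])
    show "B ((r *\<^sub>R x) * c) e = of_real r * B (x * c) e" for r x
      by (simp add: bounded_bilinear.scaleR_left[OF bb] scaleR_conv_of_real)
    show "B (J x * c) e = \<i> * B (x * c) e" for x
      using J_ml[OF CS, of x c] BJ by metis
  qed
  have pt: "ptensor J (R c x)" for c x
    unfolding ptensor_def
  proof (intro exI conjI allI impI)
    define a where "a = (\<lambda>n::nat. if n = 0 then x * c else 0)"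
    define b where "b = (\<lambda>n::nat. if n = 0 then e else 0)"
    have "(\<lambda>n. norm (a n) * norm (b n)) = (\<lambda>n. if n = 0 then norm (x * c) * norm e else 0)"
      by (auto simp: a_def b_def fun_eq_iff)
    then show "summable (\<lambda>n. norm (a n) * norm (b n))"
      using summable_single[of 0 "\<lambda>_. norm (x * c) * norm e"] by simp
    fix B :: "'a \<Rightarrow> 'a \<Rightarrow> complex" assume B: "cbil J B"
    have bb: "bounded_bilinear B" using B unfolding cbil_def by auto
    have "(\<lambda>n. B (a n) (b n)) = (\<lambda>n. if n = 0 then B (x * c) e else 0)"
      using bounded_bilinear.zero_left[OF bb] by (auto simp: a_def b_def fun_eq_iff)
    then have "(\<lambda>n. B (a n) (b n)) sums B (x * c) e"
      using sums_single[of 0 "\<lambda>_. B (x * c) e"] by simp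
    then show "R c x B = (\<Sum>n. B (a n) (b n))" unfolding R_def by (simp add: sums_iff)
  qed
  have tb: "tnorm J (R c x) \<le> (norm c * norm e) * norm x" for c x
  proof -
    have "tnorm J (R c x) \<le> norm (x * c) * norm e"
      unfolding R_def using tnorm_simple[of J "x * c" e] by blast
    also have "\<dots> \<le> (norm x * norm c) * norm e"
      by (intro mult_right_mono norm_mult_ineq) auto
    finally show ?thesis by (simp add: mult_ac)
  qed
  have lz: "tnorm J (\<lambda>B. lact a (R c x) B - R c (a * x) B) = 0" for a x c
  proof -
    have "(\<lambda>B. lact a (R c x) B - R c (a * x) B) = (\<lambda>B. 0)"
      by (simp add: lact_def R_def mult.assoc)
    moreover have "0 \<le> tnorm J (\<lambda>B::'a \<Rightarrow> 'a \<Rightarrow> complex. 0) \<and> tnorm J (\<lambda>B::'a \<Rightarrow> 'a \<Rightarrow> complex. 0) \<le> 0"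
      by (rule tnorm_bounds) auto
    ultimately show ?thesis by simp
  qed
  have rb: "0 \<le> tnorm J (\<lambda>B. R c (x * a) B - \<phi> a * R c x B) \<and>
      tnorm J (\<lambda>B. R c (x * a) B - \<phi> a * R c x B) \<le> norm (x * (a * c) - cs J (\<phi> a) (x * c)) * norm e"
    for a x c
  proof -
    have "tnorm J (\<lambda>B. R c (x * a) B - \<phi> a * R c x B)
        = tnorm J (\<lambda>B. B (x * (a * c) - cs J (\<phi> a) (x * c)) e)"
    proof (rule tnorm_cong)
      fix B :: "'a \<Rightarrow> 'a \<Rightarrow> complex" assume B: "cbil J B"
      have bb: "bounded_bilinear B" using B unfolding cbil_def by auto
      show "R c (x * a) B - \<phi> a * R c x B = B (x * (a * c) - cs J (\<phi> a) (x * c)) e"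
        unfolding R_def bounded_bilinear.diff_left[OF bb] cbil_cs[OF CS B] by (simp add: mult.assoc)
    qed
    then show ?thesis using tnorm_simple[of J "x * (a * c) - cs J (\<phi> a) (x * c)" e] by simp
  qed
  have pz: "R c x (\<lambda>u v. \<phi> (u * v)) - \<phi> x = \<phi> x * (\<phi> c - 1)" for c x
    unfolding R_def by (simp add: phim E1 algebra_simps)
  show ?thesis
    unfolding approx_left_phi_biprojective_def
  proof (intro exI[of _ "filtermap R G"] conjI allI)
    show "filtermap R G \<noteq> bot" using Gnb by (simp add: filtermap_bot_iff)
    show "\<forall>\<^sub>F \<rho> in filtermap R G. clin_map J \<rho> \<and> (\<forall>x. ptensor J (\<rho> x)) \<and> (\<exists>K. \<forall>x. tnorm J (\<rho> x) \<le> K * norm x)"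
      unfolding eventually_filtermap using clin pt tb by (intro always_eventually) blast
  next
    fix a x
    show "((\<lambda>\<rho>. tnorm J (\<lambda>B. lact a (\<rho> x) B - \<rho> (a * x) B)) \<longlongrightarrow> 0) (filtermap R G)"
      unfolding filterlim_filtermap by (simp add: lz)
  next
    fix a x
    show "((\<lambda>\<rho>. tnorm J (\<lambda>B. \<rho> (x * a) B - \<phi> a * \<rho> x B)) \<longlongrightarrow> 0) (filtermap R G)"
      unfolding filterlim_filtermap tendsto_iff
    proof (intro allI impI)
      fix \<epsilon> :: real assume \<epsilon>: "0 < \<epsilon>"
      define \<delta> where "\<delta> = \<epsilon> / (norm e + 1)"
      have ne: "0 < norm e + 1" using norm_ge_zero[of e] by linarith
      have \<delta>: "0 < \<delta>" unfolding \<delta>_def using \<epsilon> ne by simp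
      show "\<forall>\<^sub>F c in G. dist (tnorm J (\<lambda>B. R c (x * a) B - \<phi> a * R c x B)) 0 < \<epsilon>"
      proof (rule ev[where i="(x, a, \<delta>)"], safe)
        fix c assume "c \<in> Cset (x, a, \<delta>)"
        then have d: "norm (x * (a * c) - cs J (\<phi> a) (x * c)) < \<delta>" unfolding Cset_def using \<delta> by auto
        have "norm (x * (a * c) - cs J (\<phi> a) (x * c)) * norm e \<le> norm (x * (a * c) - cs J (\<phi> a) (x * c)) * (norm e + 1)"
          by (intro mult_left_mono) auto
        also have "\<dots> < \<delta> * (norm e + 1)"
          using d ne by (intro mult_strict_right_mono) auto
        also have "\<dots> = \<epsilon>" unfolding \<delta>_def using ne by simp
        finally show "dist (tnorm J (\<lambda>B. R c (x * a) B - \<phi> a * R c x B)) 0 < \<epsilon>"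
          using rb[of c x a] by simp
      qed
    qed
  next
    fix x
    show "((\<lambda>\<rho>. \<rho> x (\<lambda>u v. \<phi> (u * v)) - \<phi> x) \<longlongrightarrow> 0) (filtermap R G)"
      unfolding filterlim_filtermap tendsto_iff
    proof (intro allI impI)
      fix \<epsilon> :: real assume \<epsilon>: "0 < \<epsilon>"
      define \<delta> where "\<delta> = \<epsilon> / (cmod (\<phi> x) + 1)"
      have ne: "0 < cmod (\<phi> x) + 1" using norm_ge_zero[of "\<phi> x"] by linarith
      have \<delta>: "0 < \<delta>" unfolding \<delta>_def using \<epsilon> ne by simp
      show "\<forall>\<^sub>F c in G. dist (R c x (\<lambda>u v. \<phi> (u * v)) - \<phi> x) 0 < \<epsilon>"
      proof (rule ev[where i="(x, x, \<delta>)"], safe)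
        fix c assume "c \<in> Cset (x, x, \<delta>)"
        then have d: "cmod (\<phi> c - 1) < \<delta>" unfolding Cset_def using \<delta> by auto
        have "cmod (\<phi> x) * cmod (\<phi> c - 1) \<le> (cmod (\<phi> x) + 1) * cmod (\<phi> c - 1)"
          by (intro mult_right_mono) auto
        also have "\<dots> < (cmod (\<phi> x) + 1) * \<delta>"
          using d ne by (intro mult_strict_left_mono) auto
        also have "\<dots> = \<epsilon>" unfolding \<delta>_def using ne by simp
        finally show "dist (R c x (\<lambda>u v. \<phi> (u * v)) - \<phi> x) 0 < \<epsilon>"
          unfolding pz by (simp add: norm_mult)
      qed
    qed
  qed
qed

end
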